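(* Let $\{\Pi_{\bm{x}}\}_{\bm{x}\in\{0,1\}^n}$ be a POVM on $(\mathbb{C}^2)^{\otimes n}$ with measurement channel $\mathcal{M}(\rho)=\sum_{\bm{x}}\operatorname{tr}[\Pi_{\bm{x}}\rho]|\bm{x}\rangle\langle\bm{x}|$, let $\mathcal{M}^{\mathrm{Pauli}}(\rho)=\frac{1}{4^n}\sum_{P\in\{I,X,Y,Z\}^{\otimes n}}P\mathcal{M}(P\rho P)P$, and let $\{\Pi^{\mathrm{Pauli}}_{\bm{x}}\}_{\bm{x}}$ be the POVM with $\mathcal{M}^{\mathrm{Pauli}}(\rho)=\sum_{\bm{x}}\operatorname{tr}[\Pi^{\mathrm{Pauli}}_{\bm{x}}\rho]|\bm{x}\rangle\langle\bm{x}|$ for all $\rho$. Then for all $\bm{x},\bm{y}\in\{0,1\}^n$, $$\operatorname{diag}(\Pi^{\mathrm{Pauli}}_{\bm{y}})=\mathsf{T}_{\bm{y}}\mathsf{T}_{\bm{x}}^{-1}\operatorname{diag}(\Pi^{\mathrm{Pauli}}_{\bm{x}}).$$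
   Context: $\operatorname{diag}(A)\in\mathbb{C}^{2^n}$ is the vector $(\langle\bm{w}|A|\bm{w}\rangle)_{\bm{w}\in\{0,1\}^n}$ in the computational basis. For $\bm{x}\in\{0,1\}^n$, $\mathsf{T}_{\bm{x}}$ is the $2^n\times2^n$ matrix with rows and columns indexed by $\bm{i},\bm{j}\in\{0,1\}^n$ and entries $(\mathsf{T}_{\bm{x}})_{\bm{i}\bm{j}}=(-1)^{\sum_k (x_k\oplus i_k)\,j_k}$ ($\oplus$ is addition mod 2); it is a row-permuted Sylvester–Hadamard matrix, hence invertible. *)

theory Defs
  imports "Jordan_Normal_Form.Matrix" "Jordan_Normal_Form.Gauss_Jordan_Elimination"
begin

text \<open>n-qubit Hilbert space (C^2)^{\<otimes> n} = C^(2^n). Computational basis vectors are indexed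
  by naturals w < 2^n; the bit string of w is (bitk w 0, ..., bitk w (n-1)),
  bit k belonging to qubit k.\<close>

definition bitk :: "nat \<Rightarrow> nat \<Rightarrow> nat" where
  "bitk w k = (w div 2 ^ k) mod 2"

definition trace_mat :: "complex mat \<Rightarrow> complex" where
  "trace_mat A = (\<Sum>i<dim_row A. A $$ (i, i))"

definition psd :: "nat \<Rightarrow> complex mat \<Rightarrow> bool" where
  "psd d A \<longleftrightarrow> A \<in> carrier_mat d d \<and>
     (\<forall>v \<in> carrier_vec d.
        let q = (\<Sum>i<d. \<Sum>j<d. cnj (v $ i) * A $$ (i, j) * v $ j) in Im q = 0 \<and> Re q \<ge> 0)"

definition mat_sum :: "nat \<Rightarrow> ('i \<Rightarrow> complex mat) \<Rightarrow> 'i set \<Rightarrow> complex mat" where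
  "mat_sum d f S = mat d d (\<lambda>(i, j). \<Sum>s\<in>S. f s $$ (i, j))"

definition is_povm :: "nat \<Rightarrow> (nat \<Rightarrow> complex mat) \<Rightarrow> bool" where
  "is_povm n PM \<longleftrightarrow> (\<forall>x < 2 ^ n. psd (2 ^ n) (PM x)) \<and>
     mat_sum (2 ^ n) PM {..<2 ^ n} = 1\<^sub>m (2 ^ n)"

definition ketbra :: "nat \<Rightarrow> nat \<Rightarrow> complex mat" where
  "ketbra d x = mat d d (\<lambda>(i, j). if i = x \<and> j = x then 1 else 0)"

definition meas_channel :: "nat \<Rightarrow> (nat \<Rightarrow> complex mat) \<Rightarrow> complex mat \<Rightarrow> complex mat" where
  "meas_channel n PM rho = mat_sum (2 ^ n) (\<lambda>x. trace_mat (PM x * rho) \<cdot>\<^sub>m ketbra (2 ^ n) x) {..<2 ^ n}"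

text \<open>Single-qubit Paulis: 0 = I, 1 = X, 2 = Y, 3 = Z; entries indexed by bits a, b.\<close>
definition sigma :: "nat \<Rightarrow> nat \<Rightarrow> nat \<Rightarrow> complex" where
  "sigma p a b =
     (if p = 0 then (if a = b then 1 else 0)
      else if p = 1 then (if a \<noteq> b then 1 else 0)
      else if p = 2 then (if a = 0 \<and> b = 1 then - \<i> else if a = 1 \<and> b = 0 then \<i> else 0)
      else (if a = b then (if a = 0 then 1 else -1) else 0))"

text \<open>Pauli strings {I,X,Y,Z}^{\<otimes> n}, encoded by label functions p with p k < 4 for k < n
  and p k = 0 otherwise (so each string has exactly one label).\<close>
definition pauli_labels :: "nat \<Rightarrow> (nat \<Rightarrow> nat) set" where
  "pauli_labels n = {p. \<forall>k. (k < n \<longrightarrow> p k < 4) \<and> (k \<ge> n \<longrightarrow> p k = 0)}"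

definition pauli_mat :: "nat \<Rightarrow> (nat \<Rightarrow> nat) \<Rightarrow> complex mat" where
  "pauli_mat n p = mat (2 ^ n) (2 ^ n) (\<lambda>(i, j). \<Prod>k<n. sigma (p k) (bitk i k) (bitk j k))"

definition pauli_twirl :: "nat \<Rightarrow> (nat \<Rightarrow> complex mat) \<Rightarrow> complex mat \<Rightarrow> complex mat" where
  "pauli_twirl n PM rho = (1 / 4 ^ n) \<cdot>\<^sub>m
     mat_sum (2 ^ n) (\<lambda>p. pauli_mat n p * meas_channel n PM (pauli_mat n p * rho * pauli_mat n p) * pauli_mat n p)
       (pauli_labels n)"

definition Tmat :: "nat \<Rightarrow> nat \<Rightarrow> complex mat" where
  "Tmat n x = mat (2 ^ n) (2 ^ n)
     (\<lambda>(i, j). (-1) ^ (\<Sum>k<n. ((bitk x k + bitk i k) mod 2) * bitk j k))"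

definition diag_vec :: "complex mat \<Rightarrow> complex vec" where
  "diag_vec A = vec (dim_row A) (\<lambda>w. A $$ (w, w))"

end

theory Submission
  imports Defs "Jordan_Normal_Form.Determinant"
begin
lemma bitk_bit: "bitk a k = (if bit a k then 1 else 0)"
  unfolding bitk_def bit_iff_odd by (auto simp: odd_iff_mod_2_eq_one)
lemma bitk_xor: "bitk (xor a b) k = (bitk a k + bitk b k) mod 2"
  unfolding bitk_bit by (auto simp: bit_xor_iff)
lemma bitk_lt2: "bitk a k < 2" unfolding bitk_def by simp
lemma xor_lt: "(a::nat) < 2^n \<Longrightarrow> b < 2^n \<Longrightarrow> xor a b < 2^n"
proof -
  assume "a < 2^n" "b < 2^n"
  then have "take_bit n a = a" "take_bit n b = b" by (simp_all add: take_bit_nat_eq_self_iff)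
  then have "take_bit n (xor a b) = xor a b" by (simp only: take_bit_xor)
  then show ?thesis using take_bit_nat_less_exp[of n "xor a b"] by simp
qed
lemma eq_by_bits: assumes "(a::nat) < 2^n" "b < 2^n" "\<forall>k<n. bitk a k = bitk b k" shows "a = b"
proof (rule bit_eqI)
  fix k show "bit a k = bit b k"
  proof (cases "k < n")
    case True then show ?thesis using assms(3) unfolding bitk_bit by (metis one_neq_zero)
  next
    case False
    have "bit (take_bit n a) k = bit (take_bit n b) k" using False by (simp add: bit_take_bit_iff)
    moreover have "take_bit n a = a" "take_bit n b = b" using assms(1,2) by (simp_all add: take_bit_nat_eq_self_iff)
    ultimately show ?thesis by simp
  qed
qed
lemma bitk_high: assumes "k < 2^n" "b < 2" shows "bitk (k + 2^n*b) n = b"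
  using assms unfolding bitk_def by simp
lemma bitk_low: assumes "m < n" shows "bitk (k + 2^n*b) m = bitk k m"
proof -
  obtain r where r: "n = Suc (m + r)" using less_imp_Suc_add[OF assms] by blast
  have e: "(2::nat)^n = 2^m * 2 * 2^(n - m - 1)" unfolding r by (simp add: power_add)
  have "(k + 2^n*b) div 2^m = k div 2^m + 2 * (2^(n-m-1) * b)"
    unfolding e by (simp add: mult.assoc)
  then show ?thesis unfolding bitk_def by simp
qed
lemma sum_bits_prod:
  fixes g :: "nat \<Rightarrow> nat \<Rightarrow> 'a::comm_semiring_1"
  shows "(\<Sum>k<2^n. \<Prod>m<n. g m (bitk k m)) = (\<Prod>m<n. \<Sum>b<2. g m b)"
proof (induction n)
  case 0 then show ?case by simp
next
  case (Suc n)
  have "(\<Sum>k<2^Suc n. \<Prod>m<Suc n. g m (bitk k m)) =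
        (\<Sum>(k,b)\<in>{..<2^n} \<times> {..<2}. \<Prod>m<Suc n. g m (bitk (k + 2^n*b) m))"
  proof (rule sum.reindex_bij_witness[of _ "\<lambda>(k,b). k + 2^n*b" "\<lambda>k. (k mod 2^n, k div 2^n)"], goal_cases)
    case (1 a) then show ?case by auto
  next
    case (2 a) then show ?case by (auto simp: less_mult_imp_div_less)
  next
    case (3 a)
    obtain k b where a: "a = (k,b)" by fastforce
    with 3 have "k < 2^n" "b < 2" by auto
    then show ?case unfolding a by simp
  next
    case (4 a)
    obtain k b where a: "a = (k,b)" by fastforce
    with 4 have kb: "k < 2^n" "b < 2" by auto
    have "k + 2^n*b < 2^n + 2^n * 1" using kb by (intro add_less_le_mono) auto
    then show ?case unfolding a by simp
  next
    case (5 a) then show ?case by auto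
  qed
  also have "\<dots> = (\<Sum>k<2^n. \<Sum>b<2. (\<Prod>m<n. g m (bitk k m)) * g n b)"
    unfolding sum.cartesian_product[symmetric]
    by (intro sum.cong refl) (auto simp: bitk_high bitk_low)
  also have "\<dots> = (\<Sum>b<2. g n b) * (\<Sum>k<2^n. \<Prod>m<n. g m (bitk k m))"
    by (simp add: sum_distrib_left sum_distrib_right sum.swap[of _ "{..<2::nat}"] mult.commute)
  also have "\<dots> = (\<Prod>m<Suc n. \<Sum>b<2. g m b)" using Suc by (simp add: mult.commute)
  finally show ?case .
qed
lemma prod_if2: "(\<Prod>m<n. if C m then (2::complex) else 0) = (if \<forall>m<n. C m then 2^n else 0)"
proof (cases "\<forall>m<n. C m")
  case True then show ?thesis by simp
next
  case False
  then obtain m where "m < n" "\<not> C m" by auto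
  then have "(\<Prod>m<n. if C m then (2::complex) else 0) = 0" by (intro prod_zero) auto
  then show ?thesis using False by simp
qed

lemma sum_pauli_prod:
  "(\<Sum>p\<in>pauli_labels n. \<Prod>m<n. f m (p m)) = (\<Prod>m<n. \<Sum>q<4. (f m q :: complex))"
proof -
  have "(\<Prod>m<n. \<Sum>q<4. f m q) = (\<Sum>g\<in>PiE {..<n} (\<lambda>_. {..<4}). \<Prod>m<n. f m (g m))"
    by (rule prod_sum_PiE) auto
  also have "\<dots> = (\<Sum>p\<in>pauli_labels n. \<Prod>m<n. f m (p m))"
  proof (rule sum.reindex_bij_witness[of _ "\<lambda>p. restrict p {..<n}" "\<lambda>g k. if k < n then g k else 0"], goal_cases)
    case (1 a) then show ?case by (auto simp: PiE_def extensional_def)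
  next
    case (2 a) then show ?case by (auto simp: pauli_labels_def)
  next
    case (3 a) then show ?case by (auto simp: pauli_labels_def)
  next
    case (4 a) then show ?case by (auto simp: pauli_labels_def)
  next
    case (5 a) then show ?case by (intro prod.cong) auto
  qed
  finally show ?thesis by simp
qed

lemma sum4: "(\<Sum>q<4::nat. f q) = f 0 + f 1 + f 2 + (f 3 :: complex)"
  by (simp add: eval_nat_numeral)

lemma qubit4: assumes "a < 2" "b < 2" "c < 2" "d < 2" "e < 2"
  shows "(\<Sum>q<4. sigma q a b * sigma q c d * sigma q d e * sigma q b a) =
    (if (a + b + c + d) mod 2 = 0 \<and> c = e then 2 else 0)"
proof -
  have "a = 0 \<or> a = 1" "b = 0 \<or> b = 1" "c = 0 \<or> c = 1" "d = 0 \<or> d = 1" "e = 0 \<or> e = 1"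
    using assms by auto
  then show ?thesis unfolding sum4
    by (elim disjE) (simp_all add: sigma_def)
qed

lemma pauli_carrier: "pauli_mat n p \<in> carrier_mat (2^n) (2^n)"
  unfolding pauli_mat_def by simp
lemma pauli_entry: "i < 2^n \<Longrightarrow> j < 2^n \<Longrightarrow>
  pauli_mat n p $$ (i,j) = (\<Prod>k<n. sigma (p k) (bitk i k) (bitk j k))"
  unfolding pauli_mat_def by simp
lemma ketbra_carrier: "ketbra d x \<in> carrier_mat d d" unfolding ketbra_def by simp
lemma ketbra_entry: "i < d \<Longrightarrow> j < d \<Longrightarrow> ketbra d x $$ (i,j) = (if i = x \<and> j = x then 1 else 0)"
  unfolding ketbra_def by simp
lemma meas_carrier: "meas_channel n PM r \<in> carrier_mat (2^n) (2^n)"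
  unfolding meas_channel_def mat_sum_def by simp
lemma meas_entry: "i < 2^n \<Longrightarrow> j < 2^n \<Longrightarrow>
  meas_channel n PM r $$ (i,j) = (if i = j then trace_mat (PM i * r) else 0)"
proof -
  have e: "\<And>x P. (x::complex) * (if P then 1 else 0) = (if P then x else 0)" by simp
  assume "i < 2^n" "j < 2^n"
  then show ?thesis unfolding meas_channel_def mat_sum_def
    by (cases "i = j") (simp_all add: ketbra_def e sum.delta sum.neutral)
qed
lemma mult_entry: "A \<in> carrier_mat d d \<Longrightarrow> B \<in> carrier_mat d d \<Longrightarrow> i < d \<Longrightarrow> j < d \<Longrightarrow>
  (A * B) $$ (i,j) = (\<Sum>l<d. A $$ (i,l) * B $$ (l,j))"
  by (simp add: scalar_prod_def atLeast0LessThan)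
lemma mult3_entry: "A \<in> carrier_mat d d \<Longrightarrow> B \<in> carrier_mat d d \<Longrightarrow> C \<in> carrier_mat d d \<Longrightarrow>
  i < d \<Longrightarrow> j < d \<Longrightarrow>
  (A * B * C) $$ (i,j) = (\<Sum>l<d. \<Sum>k<d. A $$ (i,l) * B $$ (l,k) * C $$ (k,j))"
proof -
  assume c: "A \<in> carrier_mat d d" "B \<in> carrier_mat d d" "C \<in> carrier_mat d d" "i < d" "j < d"
  have AB: "A * B \<in> carrier_mat d d" using c by (intro mult_carrier_mat)
  have "(A * B * C) $$ (i,j) = (\<Sum>k<d. (A * B) $$ (i,k) * C $$ (k,j))"
    by (rule mult_entry[OF AB c(3) c(4) c(5)])
  also have "\<dots> = (\<Sum>k<d. \<Sum>l<d. A $$ (i,l) * B $$ (l,k) * C $$ (k,j))"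
    by (intro sum.cong refl) (simp add: mult_entry[OF c(1) c(2)] c(4) sum_distrib_right)
  also have "\<dots> = (\<Sum>l<d. \<Sum>k<d. A $$ (i,l) * B $$ (l,k) * C $$ (k,j))"
    by (rule sum.swap)
  finally show ?thesis .
qed
lemma trace_mult: "A \<in> carrier_mat d d \<Longrightarrow> B \<in> carrier_mat d d \<Longrightarrow>
  trace_mat (A * B) = (\<Sum>i<d. \<Sum>j<d. A $$ (i,j) * B $$ (j,i))"
  unfolding trace_mat_def by (simp add: scalar_prod_def atLeast0LessThan)
lemma povm_carrier: "is_povm n PM \<Longrightarrow> x < 2^n \<Longrightarrow> PM x \<in> carrier_mat (2^n) (2^n)"
  unfolding is_povm_def psd_def by auto
lemma bits_cond:
  assumes "y < 2^n" "w < 2^n" "k < 2^n" "i < 2^n" "j < 2^n"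
  shows "(\<forall>m<n. (bitk y m + bitk k m + bitk j m + bitk w m) mod 2 = 0 \<and> bitk j m = bitk i m)
     \<longleftrightarrow> (k = xor (xor y w) j \<and> i = j)"
proof
  assume H: "\<forall>m<n. (bitk y m + bitk k m + bitk j m + bitk w m) mod 2 = 0 \<and> bitk j m = bitk i m"
  have "k = xor (xor y w) j"
  proof (rule eq_by_bits[of _ n])
    show "k < 2^n" by fact
    show "xor (xor y w) j < 2^n" using assms by (intro xor_lt)
    show "\<forall>m<n. bitk k m = bitk (xor (xor y w) j) m"
    proof (intro allI impI)
      fix m assume "m < n"
      with H have h: "(bitk y m + bitk k m + bitk j m + bitk w m) mod 2 = 0" by auto
      have "bitk y m < 2" "bitk k m < 2" "bitk j m < 2" "bitk w m < 2" by (simp_all add: bitk_lt2)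
      with h show "bitk k m = bitk (xor (xor y w) j) m" unfolding bitk_xor by presburger
    qed
  qed
  moreover have "i = j" using H assms by (intro eq_by_bits[of _ n]) auto
  ultimately show "k = xor (xor y w) j \<and> i = j" by simp
next
  assume "k = xor (xor y w) j \<and> i = j"
  then have kk: "k = xor (xor y w) j" and ij: "i = j" by auto
  show "\<forall>m<n. (bitk y m + bitk k m + bitk j m + bitk w m) mod 2 = 0 \<and> bitk j m = bitk i m"
  proof (intro allI impI conjI)
    fix m
    show "(bitk y m + bitk k m + bitk j m + bitk w m) mod 2 = 0"
      unfolding kk bitk_xor by presburger
    show "bitk j m = bitk i m" using ij by simp
  qed
qed

lemma pauli_sum4:
  assumes "y < 2^n" "w < 2^n" "k < 2^n" "i < 2^n" "j < 2^n"
  shows "(\<Sum>p\<in>pauli_labels n. pauli_mat n p $$ (y,k) * pauli_mat n p $$ (j,w) *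
            pauli_mat n p $$ (w,i) * pauli_mat n p $$ (k,y))
       = (if k = xor (xor y w) j \<and> i = j then 2^n else 0)"
proof -
  have "(\<Sum>p\<in>pauli_labels n. pauli_mat n p $$ (y,k) * pauli_mat n p $$ (j,w) *
            pauli_mat n p $$ (w,i) * pauli_mat n p $$ (k,y))
     = (\<Sum>p\<in>pauli_labels n. \<Prod>m<n. sigma (p m) (bitk y m) (bitk k m) * sigma (p m) (bitk j m) (bitk w m)
          * sigma (p m) (bitk w m) (bitk i m) * sigma (p m) (bitk k m) (bitk y m))"
    using assms by (simp add: pauli_entry prod.distrib)
  also have "\<dots> = (\<Prod>m<n. \<Sum>q<4. sigma q (bitk y m) (bitk k m) * sigma q (bitk j m) (bitk w m)
          * sigma q (bitk w m) (bitk i m) * sigma q (bitk k m) (bitk y m))"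
    by (rule sum_pauli_prod)
  also have "\<dots> = (\<Prod>m<n. if (bitk y m + bitk k m + bitk j m + bitk w m) mod 2 = 0 \<and> bitk j m = bitk i m then 2 else 0)"
    by (intro prod.cong refl qubit4) (simp_all add: bitk_lt2)
  also have "\<dots> = (if k = xor (xor y w) j \<and> i = j then 2^n else 0)"
    unfolding prod_if2 bits_cond[OF assms] ..
  finally show ?thesis .
qed
lemma four_pow: "(4::complex)^n = 2^n * 2^n"
proof -
  have "(4::complex)^n = (2*2)^n" by simp
  then show ?thesis by (simp only: power_mult_distrib)
qed

lemma aux_quarter: "(1 / 4^n) * (S * 2^n) = (1 / 2^n) * (S::complex)"
proof -
  have nz: "(2::complex)^n \<noteq> 0" by simp
  have "\<And>a. (a::complex) \<noteq> 0 \<Longrightarrow> (1 / (a * a)) * (S * a) = (1 / a) * S"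
    by (simp add: field_simps)
  from this[OF nz] show ?thesis by (simp only: four_pow)
qed

lemma key:
  assumes P1: "is_povm n PM" and P2: "is_povm n PMp"
    and TW: "\<forall>rho \<in> carrier_mat (2 ^ n) (2 ^ n). pauli_twirl n PM rho = meas_channel n PMp rho"
    and y: "y < 2^n" and w: "w < 2^n"
  shows "PMp y $$ (w,w) = (1/2^n) * (\<Sum>j<2^n. PM (xor (xor y w) j) $$ (j,j))"
proof -
  define N :: nat where "N = 2^n"
  define E where "E = ketbra N w"
  have E: "E \<in> carrier_mat N N" unfolding E_def by (rule ketbra_carrier)
  have yN: "y < N" and wN: "w < N" using y w unfolding N_def by auto
  have PMc: "\<And>k. k < N \<Longrightarrow> PM k \<in> carrier_mat N N" using P1 povm_carrier unfolding N_def by blast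
  have PMpc: "PMp y \<in> carrier_mat N N" using P2 povm_carrier y unfolding N_def by blast
  have Pc: "\<And>p. pauli_mat n p \<in> carrier_mat N N" unfolding N_def by (rule pauli_carrier)
  have Mc: "\<And>r. meas_channel n PM r \<in> carrier_mat N N" unfolding N_def by (rule meas_carrier)
  have Ee: "\<And>i j. i < N \<Longrightarrow> j < N \<Longrightarrow> E $$ (i,j) = (if i = w \<and> j = w then 1 else 0)"
    unfolding E_def by (rule ketbra_entry)
  have Me: "\<And>i j r. i < N \<Longrightarrow> j < N \<Longrightarrow> meas_channel n PM r $$ (i,j) = (if i = j then trace_mat (PM i * r) else 0)"
    unfolding N_def by (rule meas_entry)
  have Mpe: "\<And>i j r. i < N \<Longrightarrow> j < N \<Longrightarrow> meas_channel n PMp r $$ (i,j) = (if i = j then trace_mat (PMp i * r) else 0)"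
    unfolding N_def by (rule meas_entry)
  have rhs: "meas_channel n PMp E $$ (y,y) = PMp y $$ (w,w)"
  proof -
    have "meas_channel n PMp E $$ (y,y) = trace_mat (PMp y * E)" using yN Mpe by simp
    also have "\<dots> = (\<Sum>i<N. \<Sum>j<N. PMp y $$ (i,j) * E $$ (j,i))" by (rule trace_mult[OF PMpc E])
    also have "\<dots> = (\<Sum>i<N. \<Sum>j<N. if j = w then if i = w then PMp y $$ (i,j) else 0 else 0)"
      by (intro sum.cong refl) (simp add: Ee)
    also have "\<dots> = PMp y $$ (w,w)" using wN by (simp add: sum.delta)
    finally show ?thesis .
  qed
  have PEP: "\<And>p j i. j < N \<Longrightarrow> i < N \<Longrightarrow> (pauli_mat n p * E * pauli_mat n p) $$ (j,i)
      = pauli_mat n p $$ (j,w) * pauli_mat n p $$ (w,i)"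
  proof -
    fix p j i assume ji: "j < N" "i < N"
    have "(pauli_mat n p * E * pauli_mat n p) $$ (j,i) = (\<Sum>l<N. \<Sum>k<N. pauli_mat n p $$ (j,l) * E $$ (l,k) * pauli_mat n p $$ (k,i))"
      by (rule mult3_entry[OF Pc E Pc ji])
    also have "\<dots> = (\<Sum>l<N. \<Sum>k<N. if k = w then if l = w then pauli_mat n p $$ (j,l) * pauli_mat n p $$ (k,i) else 0 else 0)"
      by (intro sum.cong refl) (simp add: Ee)
    also have "\<dots> = pauli_mat n p $$ (j,w) * pauli_mat n p $$ (w,i)" using wN by (simp add: sum.delta)
    finally show "(pauli_mat n p * E * pauli_mat n p) $$ (j,i) = pauli_mat n p $$ (j,w) * pauli_mat n p $$ (w,i)" .
  qed
  have h2: "\<And>p. (pauli_mat n p * meas_channel n PM (pauli_mat n p * E * pauli_mat n p) * pauli_mat n p) $$ (y,y)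
     = (\<Sum>k<N. \<Sum>i<N. \<Sum>j<N. PM k $$ (i,j) * (pauli_mat n p $$ (y,k) * pauli_mat n p $$ (j,w) *
            pauli_mat n p $$ (w,i) * pauli_mat n p $$ (k,y)))"
  proof -
    fix p
    let ?P = "pauli_mat n p" and ?R = "pauli_mat n p * E * pauli_mat n p"
    have Rc: "?R \<in> carrier_mat N N" by (rule mult_carrier_mat[OF mult_carrier_mat[OF Pc E] Pc])
    have "(?P * meas_channel n PM ?R * ?P) $$ (y,y) = (\<Sum>l<N. \<Sum>k<N. ?P $$ (y,l) * meas_channel n PM ?R $$ (l,k) * ?P $$ (k,y))"
      by (rule mult3_entry[OF Pc Mc Pc yN yN])
    also have "\<dots> = (\<Sum>l<N. \<Sum>k<N. if l = k then ?P $$ (y,k) * trace_mat (PM k * ?R) * ?P $$ (k,y) else 0)"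
      by (intro sum.cong refl) (simp add: Me)
    also have "\<dots> = (\<Sum>k<N. ?P $$ (y,k) * trace_mat (PM k * ?R) * ?P $$ (k,y))"
      by (subst sum.swap) (simp add: sum.delta)
    also have "\<dots> = (\<Sum>k<N. ?P $$ (y,k) * (\<Sum>i<N. \<Sum>j<N. PM k $$ (i,j) * (?P $$ (j,w) * ?P $$ (w,i)))  * ?P $$ (k,y))"
      by (intro sum.cong refl) (simp add: trace_mult[OF PMc Rc] PEP)
    also have "\<dots> = (\<Sum>k<N. \<Sum>i<N. \<Sum>j<N. PM k $$ (i,j) * (?P $$ (y,k) * ?P $$ (j,w) * ?P $$ (w,i) * ?P $$ (k,y)))"
      by (simp add: sum_distrib_left sum_distrib_right ac_simps)
    finally show "(?P * meas_channel n PM ?R * ?P) $$ (y,y) = (\<Sum>k<N. \<Sum>i<N. \<Sum>j<N. PM k $$ (i,j) * (?P $$ (y,k) * ?P $$ (j,w) * ?P $$ (w,i) * ?P $$ (k,y)))" .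
  qed
  have fin: "finite (pauli_labels n)"
  proof -
    have "pauli_labels n \<subseteq> (\<lambda>g k. if k < n then g k else 0) ` PiE {..<n} (\<lambda>_. {..<4::nat})"
    proof
      fix p assume "p \<in> pauli_labels n"
      then have "p = (\<lambda>k. if k < n then restrict p {..<n} k else 0)" "restrict p {..<n} \<in> PiE {..<n} (\<lambda>_. {..<4::nat})"
        by (auto simp: pauli_labels_def fun_eq_iff)
      then show "p \<in> (\<lambda>g k. if k < n then g k else 0) ` PiE {..<n} (\<lambda>_. {..<4::nat})" by blast
    qed
    then show ?thesis by (rule finite_subset) (auto intro: finite_PiE)
  qed
  have eq: "pauli_twirl n PM E = meas_channel n PMp E" using TW E unfolding N_def by blast
  have "pauli_twirl n PM E $$ (y,y) = (1/4^n) * (\<Sum>p\<in>pauli_labels n.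
      (pauli_mat n p * meas_channel n PM (pauli_mat n p * E * pauli_mat n p) * pauli_mat n p) $$ (y,y))"
    unfolding pauli_twirl_def mat_sum_def using y by simp
  also have "\<dots> = (1/4^n) * (\<Sum>k<N. \<Sum>i<N. \<Sum>j<N. PM k $$ (i,j) * (\<Sum>p\<in>pauli_labels n.
      pauli_mat n p $$ (y,k) * pauli_mat n p $$ (j,w) * pauli_mat n p $$ (w,i) * pauli_mat n p $$ (k,y)))"
    unfolding h2 by (simp add: sum_distrib_left sum.swap[of _ "pauli_labels n"])
  also have "\<dots> = (1/4^n) * (\<Sum>k<N. \<Sum>i<N. \<Sum>j<N. if k = xor (xor y w) j \<and> i = j then PM k $$ (i,j) * 2^n else 0)"
    by (intro arg_cong[where f="\<lambda>x. _ * x"] sum.cong refl) (simp add: pauli_sum4 y w N_def)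
  also have "\<dots> = (1/4^n) * (\<Sum>k<N. \<Sum>i<N. if k = xor (xor y w) i then PM k $$ (i,i) * 2^n else 0)"
  proof (intro arg_cong[where f="\<lambda>x. _ * x"] sum.cong refl)
    fix k i assume "i \<in> {..<N}"
    then have iN: "i < N" by simp
    have "(\<Sum>j<N. if k = xor (xor y w) j \<and> i = j then PM k $$ (i,j) * 2^n else 0)
        = (\<Sum>j<N. if j = i then (if k = xor (xor y w) j then PM k $$ (i,j) * 2^n else 0) else 0)"
      by (intro sum.cong refl) auto
    also have "\<dots> = (if k = xor (xor y w) i then PM k $$ (i,i) * 2^n else 0)"
      using iN by (simp add: sum.delta)
    finally show "(\<Sum>j<N. if k = xor (xor y w) j \<and> i = j then PM k $$ (i,j) * 2^n else 0)
        = (if k = xor (xor y w) i then PM k $$ (i,i) * 2^n else 0)" .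
  qed
  also have "\<dots> = (1/4^n) * (\<Sum>i<N. \<Sum>k<N. if k = xor (xor y w) i then PM k $$ (i,i) * 2^n else 0)"
    by (subst sum.swap) (rule refl)
  also have "\<dots> = (1/4^n) * (\<Sum>j<N. PM (xor (xor y w) j) $$ (j,j) * 2^n)"
  proof (intro arg_cong[where f="\<lambda>x. _ * x"] sum.cong refl)
    fix i assume "i \<in> {..<N}"
    then have "xor (xor y w) i < N" using xor_lt[OF xor_lt[OF y w]] unfolding N_def by simp
    then show "(\<Sum>k<N. if k = xor (xor y w) i then PM k $$ (i,i) * 2^n else 0) = PM (xor (xor y w) i) $$ (i,i) * 2^n"
      by (simp add: sum.delta)
  qed
  also have "\<dots> = (1/2^n) * (\<Sum>j<N. PM (xor (xor y w) j) $$ (j,j))"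
  proof -
    have "(\<Sum>j<N. PM (xor (xor y w) j) $$ (j,j) * 2^n) = (\<Sum>j<N. PM (xor (xor y w) j) $$ (j,j)) * 2^n"
      by (rule sum_distrib_right[symmetric])
    then show ?thesis by (simp only: aux_quarter)
  qed
  finally have tw: "pauli_twirl n PM E $$ (y,y) = (1/2^n) * (\<Sum>j<N. PM (xor (xor y w) j) $$ (j,j))" .
  have "PMp y $$ (w,w) = (1/2^n) * (\<Sum>j<N. PM (xor (xor y w) j) $$ (j,j))"
    using rhs tw unfolding eq by simp
  then show ?thesis unfolding N_def .
qed

lemma xor_cancel: "xor x (xor (xor x y) i) = xor y (i::nat)"
  by (rule bit_eqI) (auto simp: bit_xor_iff)

definition Qm :: "nat \<Rightarrow> nat \<Rightarrow> complex mat" where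
  "Qm n c = mat (2^n) (2^n) (\<lambda>(i,j). if j = xor c i then 1 else 0)"

lemma Qm_carrier: "Qm n c \<in> carrier_mat (2^n) (2^n)" unfolding Qm_def by simp

lemma Tmat_carrier: "Tmat n x \<in> carrier_mat (2^n) (2^n)" unfolding Tmat_def by simp

lemma Qm_mult_vec: assumes "c < 2^n" "i < 2^n" "v \<in> carrier_vec (2^n)"
  shows "(Qm n c *\<^sub>v v) $ i = v $ (xor c i)"
proof -
  have ci: "xor c i < 2^n" using assms by (intro xor_lt)
  have "(Qm n c *\<^sub>v v) $ i = (\<Sum>l<2^n. (if l = xor c i then 1 else 0) * v $ l)"
    using assms unfolding Qm_def by (simp add: scalar_prod_def atLeast0LessThan)
  also have "\<dots> = (\<Sum>l<2^n. if l = xor c i then v $ l else 0)"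
    by (intro sum.cong refl) auto
  also have "\<dots> = v $ (xor c i)" using ci by (simp add: sum.delta)
  finally show ?thesis .
qed

lemma mod2_cancel: "((a::nat) + ((a + b) mod 2 + c) mod 2) mod 2 = (b + c) mod 2"
  by presburger

lemma Tmat_shift: assumes "x < 2^n" "y < 2^n"
  shows "Tmat n y = Qm n (xor x y) * Tmat n x"
proof (rule eq_matI)
  fix i j assume ij: "i < dim_row (Qm n (xor x y) * Tmat n x)" "j < dim_col (Qm n (xor x y) * Tmat n x)"
  then have i: "i < 2^n" and j: "j < 2^n" unfolding Qm_def Tmat_def by auto
  have c: "xor (xor x y) i < 2^n" using assms i by (intro xor_lt)
  have "(Qm n (xor x y) * Tmat n x) $$ (i,j) = (\<Sum>l<2^n. Qm n (xor x y) $$ (i,l) * Tmat n x $$ (l,j))"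
    by (rule mult_entry[OF Qm_carrier Tmat_carrier i j])
  also have "\<dots> = (\<Sum>l<2^n. if l = xor (xor x y) i then Tmat n x $$ (l,j) else 0)"
    using i unfolding Qm_def by (intro sum.cong refl) auto
  also have "\<dots> = Tmat n x $$ (xor (xor x y) i, j)" using c by (simp add: sum.delta)
  also have "\<dots> = (-1) ^ (\<Sum>k<n. ((bitk x k + bitk (xor (xor x y) i) k) mod 2) * bitk j k)"
    using c j unfolding Tmat_def by simp
  also have "\<dots> = (-1) ^ (\<Sum>k<n. ((bitk y k + bitk i k) mod 2) * bitk j k)"
    unfolding bitk_xor by (intro arg_cong[where f="\<lambda>e. (-1) ^ e"] sum.cong refl) (simp only: mod2_cancel)
  also have "\<dots> = Tmat n y $$ (i,j)" using i j unfolding Tmat_def by simp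
  finally show "Tmat n y $$ (i,j) = (Qm n (xor x y) * Tmat n x) $$ (i,j)" by simp
qed (auto simp: Qm_def Tmat_def)


lemma Tmat_entry: "i < 2^n \<Longrightarrow> j < 2^n \<Longrightarrow>
  Tmat n x $$ (i,j) = (\<Prod>m<n. (-1) ^ (((bitk x m + bitk i m) mod 2) * bitk j m))"
  unfolding Tmat_def by (simp add: power_sum)

lemma two_cases: assumes "(a::nat) < 2" "b < 2"
  shows "(\<Sum>c<2::nat. (-1::complex) ^ (a * c) * (-1) ^ (b * c)) = (if a = b then 2 else 0)"
proof -
  have "a = 0 \<or> a = 1" "b = 0 \<or> b = 1" using assms by auto
  then show ?thesis by (elim disjE) (simp_all add: eval_nat_numeral)
qed

lemma T_orth: "Tmat n x * transpose_mat (Tmat n x) = (of_nat (2^n) :: complex) \<cdot>\<^sub>m 1\<^sub>m (2^n)"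
proof (rule eq_matI)
  fix i j assume "i < dim_row ((of_nat (2^n) :: complex) \<cdot>\<^sub>m 1\<^sub>m (2^n))"
    "j < dim_col ((of_nat (2^n) :: complex) \<cdot>\<^sub>m 1\<^sub>m (2^n))"
  then have i: "i < 2^n" and j: "j < 2^n" by auto
  have Tt: "transpose_mat (Tmat n x) \<in> carrier_mat (2^n) (2^n)" using Tmat_carrier by simp
  have "(Tmat n x * transpose_mat (Tmat n x)) $$ (i,j) = (\<Sum>k<2^n. Tmat n x $$ (i,k) * transpose_mat (Tmat n x) $$ (k,j))"
    by (rule mult_entry[OF Tmat_carrier Tt i j])
  also have "\<dots> = (\<Sum>k<2^n. \<Prod>m<n. (-1) ^ (((bitk x m + bitk i m) mod 2) * bitk k m) * (-1) ^ (((bitk x m + bitk j m) mod 2) * bitk k m))"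
  proof (intro sum.cong refl)
    fix k assume "k \<in> {..<(2::nat)^n}"
    then have k: "k < 2^n" by simp
    have "transpose_mat (Tmat n x) $$ (k,j) = Tmat n x $$ (j,k)"
      using Tmat_carrier[of n x] j k by (simp add: index_transpose_mat)
    then show "Tmat n x $$ (i,k) * transpose_mat (Tmat n x) $$ (k,j) = (\<Prod>m<n. (-1) ^ (((bitk x m + bitk i m) mod 2) * bitk k m) * (-1) ^ (((bitk x m + bitk j m) mod 2) * bitk k m))"
      using i j k by (simp add: Tmat_entry prod.distrib)
  qed
  also have "\<dots> = (\<Prod>m<n. \<Sum>c<2. (-1) ^ (((bitk x m + bitk i m) mod 2) * c) * (-1) ^ (((bitk x m + bitk j m) mod 2) * c))"
    by (rule sum_bits_prod)
  also have "\<dots> = (\<Prod>m<n. if (bitk x m + bitk i m) mod 2 = (bitk x m + bitk j m) mod 2 then (2::complex) else 0)"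
    by (intro prod.cong refl two_cases) auto
  also have "\<dots> = (if \<forall>m<n. (bitk x m + bitk i m) mod 2 = (bitk x m + bitk j m) mod 2 then 2^n else 0)"
    by (rule prod_if2)
  also have "\<dots> = (if i = j then 2^n else 0)"
  proof -
    have "(\<forall>m<n. (bitk x m + bitk i m) mod 2 = (bitk x m + bitk j m) mod 2) \<longleftrightarrow> (\<forall>m<n. bitk i m = bitk j m)"
    proof -
      have "\<And>m. (bitk x m + bitk i m) mod 2 = (bitk x m + bitk j m) mod 2 \<longleftrightarrow> bitk i m = bitk j m"
      proof -
        fix m
        have "bitk i m < 2" "bitk j m < 2" by (simp_all add: bitk_lt2)
        then show "(bitk x m + bitk i m) mod 2 = (bitk x m + bitk j m) mod 2 \<longleftrightarrow> bitk i m = bitk j m"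
          by presburger
      qed
      then show ?thesis by simp
    qed
    also have "\<dots> \<longleftrightarrow> i = j" using i j eq_by_bits by blast
    finally show ?thesis by simp
  qed
  also have "\<dots> = ((of_nat (2^n) :: complex) \<cdot>\<^sub>m 1\<^sub>m (2^n)) $$ (i,j)" using i j by simp
  finally show "(Tmat n x * transpose_mat (Tmat n x)) $$ (i,j) = ((of_nat (2^n) :: complex) \<cdot>\<^sub>m 1\<^sub>m (2^n)) $$ (i,j)" .
qed (auto simp: Tmat_def)


lemma T_inverse: assumes "mat_inverse (Tmat n x) = Some B"
  shows "Tmat n x * B = 1\<^sub>m (2^n)" "B \<in> carrier_mat (2^n) (2^n)"
  using mat_inverse(2)[OF Tmat_carrier assms] by auto

lemma T_inv_exists: "\<exists>B. mat_inverse (Tmat n x) = Some B"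
proof (cases "mat_inverse (Tmat n x)")
  case None
  define B0 where "B0 = (1 / of_nat (2^n) :: complex) \<cdot>\<^sub>m transpose_mat (Tmat n x)"
  have B0: "B0 \<in> carrier_mat (2^n) (2^n)" unfolding B0_def using Tmat_carrier by simp
  have "Tmat n x * B0 = (1 / of_nat (2^n) :: complex) \<cdot>\<^sub>m (Tmat n x * transpose_mat (Tmat n x))"
    unfolding B0_def using Tmat_carrier by (intro mult_smult_distrib) auto
  also have "\<dots> = 1\<^sub>m (2^n)" unfolding T_orth by (intro eq_matI) auto
  finally have TB: "Tmat n x * B0 = 1\<^sub>m (2^n)" .
  have BT: "B0 * Tmat n x = 1\<^sub>m (2^n)" by (rule mat_mult_left_right_inverse[OF Tmat_carrier B0 TB])
  have "Tmat n x \<in> Units (ring_mat TYPE(complex) (2^n) ())"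
    unfolding Units_def ring_mat_def using Tmat_carrier B0 TB BT by auto
  with mat_inverse(1)[OF Tmat_carrier None, where b="()"] show ?thesis by blast
qed auto

theorem proposition5:
  fixes n :: nat and PM PMp :: "nat \<Rightarrow> complex mat" and x y :: nat
  assumes "is_povm n PM"
    and "is_povm n PMp"
    and "\<forall>rho \<in> carrier_mat (2 ^ n) (2 ^ n). pauli_twirl n PM rho = meas_channel n PMp rho"
    and "x < 2 ^ n" and "y < 2 ^ n"
  shows "diag_vec (PMp y) = (Tmat n y * the (mat_inverse (Tmat n x))) *\<^sub>v diag_vec (PMp x)"
proof -
  obtain B where B: "mat_inverse (Tmat n x) = Some B" using T_inv_exists by blast
  have TB: "Tmat n x * B = 1\<^sub>m (2^n)" and Bc: "B \<in> carrier_mat (2^n) (2^n)" using T_inverse[OF B] by auto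
  let ?Q = "Qm n (xor x y)"
  have "Tmat n y * B = ?Q * Tmat n x * B" using Tmat_shift[OF assms(4,5)] by simp
  also have "\<dots> = ?Q * (Tmat n x * B)" by (rule assoc_mult_mat[OF Qm_carrier Tmat_carrier Bc])
  also have "\<dots> = ?Q" unfolding TB by (rule right_mult_one_mat[OF Qm_carrier])
  finally have QB: "Tmat n y * the (mat_inverse (Tmat n x)) = ?Q" using B by simp
  have cy: "PMp y \<in> carrier_mat (2^n) (2^n)" and cx: "PMp x \<in> carrier_mat (2^n) (2^n)"
    using povm_carrier[OF assms(2)] assms(4,5) by auto
  have dx: "diag_vec (PMp x) \<in> carrier_vec (2^n)" using cx unfolding diag_vec_def by auto
  have cxy: "xor x y < 2^n" using assms(4,5) by (rule xor_lt)
  show ?thesis unfolding QB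
  proof (rule eq_vecI)
    show "dim_vec (diag_vec (PMp y)) = dim_vec (?Q *\<^sub>v diag_vec (PMp x))"
      using cy unfolding diag_vec_def Qm_def by simp
    fix i assume "i < dim_vec (?Q *\<^sub>v diag_vec (PMp x))"
    then have i: "i < 2^n" unfolding Qm_def by simp
    have ci: "xor (xor x y) i < 2^n" using cxy i by (rule xor_lt)
    have "(?Q *\<^sub>v diag_vec (PMp x)) $ i = diag_vec (PMp x) $ (xor (xor x y) i)"
      by (rule Qm_mult_vec[OF cxy i dx])
    also have "\<dots> = PMp x $$ (xor (xor x y) i, xor (xor x y) i)" using cx ci unfolding diag_vec_def by simp
    also have "\<dots> = (1/2^n) * (\<Sum>j<2^n. PM (xor (xor x (xor (xor x y) i)) j) $$ (j,j))"
      by (rule key[OF assms(1,2,3,4) ci])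
    also have "\<dots> = (1/2^n) * (\<Sum>j<2^n. PM (xor (xor y i) j) $$ (j,j))"
      unfolding xor_cancel ..
    also have "\<dots> = PMp y $$ (i,i)" by (rule key[OF assms(1,2,3,5) i, symmetric])
    also have "\<dots> = diag_vec (PMp y) $ i" using cy i unfolding diag_vec_def by simp
    finally show "diag_vec (PMp y) $ i = (?Q *\<^sub>v diag_vec (PMp x)) $ i" by simp
  qed
qed

end
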